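(* Let $y_0:A\to\Delta(B)$ satisfy $U^1(\mu_0,y_0)>U^1(\mu,y_0)$ for every $\mu\in\mathcal{M}\setminus\{\mu_0\}$ and $U^2(\mu_0,y_0)>v^2$; let $\bar y:A\to\Delta(B)$ satisfy $U^1(\mu_0,\bar y)\ge U^1(\mu,\bar y)$ for all $\mu\in\mathcal{M}$ and $U^2(\mu_0,\bar y)\ge v^2$; let $\varepsilon\in(0,1]$ and $y=\varepsilon y_0+(1-\varepsilon)\bar y$. Assume $\mathcal{M}$ has at least one extreme point different from $\mu_0$, and let $\mathcal{M}_e$ be the set of extreme points of $\mathcal{M}$, $c_1=\min_{\mu_e\in\mathcal{M}_e,\mu_e\neq\mu_0}\big(U^1(\mu_0,y_0)-U^1(\mu_e,y_0)\big)$ and $c_2=\max_{\mu_e\in\mathcal{M}_e,\mu_e\ne\mu_0}\|\mu_e-\mu_0\|_1$. Then for every $\mu\in\mathcal{M}$, $U^1(\mu_0,y)-U^1(\mu,y)\ge\frac{\varepsilon c_1}{c_2}\|\mu-\mu_0\|_1$.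
   Context: $S$ is finite, $A=S$, $B$ finite, $u=(u^1,u^2):S\times B\to\mathbb{R}^2$ extended linearly to mixed actions. $m\in\Delta(S)$ has full support. $\mathcal{M}\subset\Delta(S\times A)$ is the (polytope) set of distributions on $S\times A$ both of whose marginals equal $m$; $\mu_0(s,s)=m(s)$, $\mu_0(s,a)=0$ for $s\ne a$. For $\mu\in\mathcal{M}$ and $y:A\to\Delta(B)$, $U(\mu,y)=\sum_{s,a}\mu(s,a)u(s,y(\cdot\mid a))$; $v^2=\max_{b\in B}\sum_s m(s)u^2(s,b)$. *)

theory Defs
  imports "HOL-Analysis.Analysis"
begin

definition is_distr :: "('b::finite \<Rightarrow> real) \<Rightarrow> bool" where
  "is_distr p \<longleftrightarrow> (\<forall>b. 0 \<le> p b) \<and> (\<Sum>b\<in>UNIV. p b) = 1"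

definition is_strategy :: "('s::finite \<Rightarrow> 'b::finite \<Rightarrow> real) \<Rightarrow> bool" where
  "is_strategy y \<longleftrightarrow> (\<forall>a. is_distr (y a))"

text \<open>Distributions on S x A (A = S) as vectors in R^(S x A) with both marginals equal to m.\<close>
definition Mset :: "('s::finite \<Rightarrow> real) \<Rightarrow> (real ^ ('s \<times> 's)) set" where
  "Mset m = {\<mu>. (\<forall>x. 0 \<le> \<mu> $ x) \<and> (\<Sum>x\<in>UNIV. \<mu> $ x) = 1
              \<and> (\<forall>s. (\<Sum>a\<in>UNIV. \<mu> $ (s, a)) = m s)
              \<and> (\<forall>a. (\<Sum>s\<in>UNIV. \<mu> $ (s, a)) = m a)}"

definition mu0 :: "('s::finite \<Rightarrow> real) \<Rightarrow> real ^ ('s \<times> 's)" where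
  "mu0 m = (\<chi> x. if fst x = snd x then m (fst x) else 0)"

definition uext :: "('s \<Rightarrow> 'b::finite \<Rightarrow> real) \<Rightarrow> 's \<Rightarrow> ('b \<Rightarrow> real) \<Rightarrow> real" where
  "uext u s q = (\<Sum>b\<in>UNIV. q b * u s b)"

definition Upay :: "('s::finite \<Rightarrow> 'b::finite \<Rightarrow> real) \<Rightarrow> real ^ ('s \<times> 's)
                     \<Rightarrow> ('s \<Rightarrow> 'b \<Rightarrow> real) \<Rightarrow> real" where
  "Upay u \<mu> y = (\<Sum>x\<in>UNIV. \<mu> $ x * uext u (fst x) (y (snd x)))"

definition v2 :: "('s::finite \<Rightarrow> 'b::finite \<Rightarrow> real) \<Rightarrow> ('s \<Rightarrow> real) \<Rightarrow> real" where
  "v2 u2 m = Max (range (\<lambda>b. \<Sum>s\<in>UNIV. m s * u2 s b))"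

definition l1dist :: "real ^ 'n::finite \<Rightarrow> real ^ 'n \<Rightarrow> real" where
  "l1dist \<mu> \<nu> = (\<Sum>x\<in>UNIV. \<bar>\<mu> $ x - \<nu> $ x\<bar>)"

end

theory Submission imports Defs begin

lemma sum_pair: "(\<Sum>p\<in>UNIV. f p) = (\<Sum>s\<in>UNIV. \<Sum>a\<in>UNIV. f (s, a))"
  by (simp only: sum.cartesian_product UNIV_Times_UNIV) (simp add: split_def)

lemma inner_fst: fixes \<mu> :: "real ^ ('s::finite \<times> 's)"
  shows "(\<chi> p. if fst p = s then 1 else 0) \<bullet> \<mu> = (\<Sum>a\<in>UNIV. \<mu> $ (s, a))"
proof -
  have "(\<chi> p. if fst p = s then 1 else 0) \<bullet> \<mu> = (\<Sum>p\<in>UNIV. if fst p = s then \<mu> $ p else 0)"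
    by (auto simp add: inner_vec_def intro!: sum.cong)
  also have "\<dots> = (\<Sum>s'\<in>UNIV. \<Sum>a\<in>UNIV. if s' = s then \<mu> $ (s', a) else 0)"
    by (subst sum_pair) simp
  also have "\<dots> = (\<Sum>a\<in>UNIV. \<mu> $ (s, a))"
    by (simp add: sum.swap[of _ UNIV UNIV])
  finally show ?thesis .
qed

lemma inner_snd: fixes \<mu> :: "real ^ ('s::finite \<times> 's)"
  shows "(\<chi> p. if snd p = a then 1 else 0) \<bullet> \<mu> = (\<Sum>s\<in>UNIV. \<mu> $ (s, a))"
proof -
  have "(\<chi> p. if snd p = a then 1 else 0) \<bullet> \<mu> = (\<Sum>p\<in>UNIV. if snd p = a then \<mu> $ p else 0)"
    by (auto simp add: inner_vec_def intro!: sum.cong)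
  also have "\<dots> = (\<Sum>s'\<in>UNIV. \<Sum>a'\<in>UNIV. if a' = a then \<mu> $ (s', a') else 0)"
    by (subst sum_pair) simp
  also have "\<dots> = (\<Sum>s\<in>UNIV. \<mu> $ (s, a))"
    by simp
  finally show ?thesis .
qed

lemma inner_one: fixes \<mu> :: "real ^ 'n::finite"
  shows "(\<chi> p. 1) \<bullet> \<mu> = (\<Sum>x\<in>UNIV. \<mu> $ x)"
  by (simp add: inner_vec_def)

lemma Mset_eq: "Mset m = cbox 0 (\<chi> _. 1) \<inter> {\<mu>. (\<chi> p. 1) \<bullet> \<mu> = 1}
   \<inter> \<Inter>(range (\<lambda>s. {\<mu>. (\<chi> p. if fst p = s then 1 else 0) \<bullet> \<mu> = m s}))
   \<inter> \<Inter>(range (\<lambda>a. {\<mu>. (\<chi> p. if snd p = a then 1 else 0) \<bullet> \<mu> = m a}))"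
proof -
  have le1: "\<mu> $ x \<le> 1" if "\<forall>x. 0 \<le> \<mu> $ x" "(\<Sum>x\<in>UNIV. \<mu> $ x) = 1" for \<mu> :: "real ^ 'n::finite" and x
  proof -
    have "\<mu> $ x \<le> (\<Sum>x\<in>UNIV. \<mu> $ x)" by (rule member_le_sum) (use that in auto)
    with that show ?thesis by simp
  qed
  show ?thesis
    unfolding Mset_def mem_box_cart inner_fst inner_snd inner_one
    using le1 by (auto simp: set_eq_iff mem_box_cart)
qed

lemma Mset_polyhedron: "polyhedron (Mset m)"
  unfolding Mset_eq
  by (intro polyhedron_Int polyhedron_interval polyhedron_hyperplane polyhedron_Inter) (auto intro: polyhedron_hyperplane)

lemma Mset_bounded: "bounded (Mset m)"
  unfolding Mset_eq by (rule bounded_subset[OF bounded_cbox]) auto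

lemma Upay_lin_mu: "Upay u (a *\<^sub>R x + b *\<^sub>R y) z = a * Upay u x z + b * Upay u y z"
  unfolding Upay_def by (simp add: algebra_simps sum.distrib sum_distrib_left)

lemma Upay_lin_y: "Upay u \<mu> (\<lambda>a b. e * y0 a b + (1 - e) * yb a b) = e * Upay u \<mu> y0 + (1 - e) * Upay u \<mu> yb"
  unfolding Upay_def uext_def by (simp add: distrib_left distrib_right sum.distrib sum_distrib_left mult_ac)

lemma l1_convex:
  assumes "0 \<le> a" "0 \<le> b" "a + b = 1"
  shows "l1dist (a *\<^sub>R x + b *\<^sub>R y) z \<le> a * l1dist x z + b * l1dist y z"
proof -
  have "\<bar>(a *\<^sub>R x + b *\<^sub>R y) $ i - z $ i\<bar> \<le> a * \<bar>x $ i - z $ i\<bar> + b * \<bar>y $ i - z $ i\<bar>" for i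
  proof -
    have "(a *\<^sub>R x + b *\<^sub>R y) $ i - z $ i = a * (x $ i - z $ i) + b * (y $ i - z $ i)"
    proof -
      have "z $ i = a * z $ i + b * z $ i" using assms(3) by (metis distrib_right mult_1)
      then show ?thesis by (simp add: algebra_simps)
    qed
    also have "\<bar>\<dots>\<bar> \<le> a * \<bar>x $ i - z $ i\<bar> + b * \<bar>y $ i - z $ i\<bar>"
      using abs_triangle_ineq[of "a * (x $ i - z $ i)" "b * (y $ i - z $ i)"] assms(1,2)
      by (simp add: abs_mult)
    finally show ?thesis .
  qed
  then have "l1dist (a *\<^sub>R x + b *\<^sub>R y) z \<le> (\<Sum>i\<in>UNIV. a * \<bar>x $ i - z $ i\<bar> + b * \<bar>y $ i - z $ i\<bar>)"
    unfolding l1dist_def by (intro sum_mono) auto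
  then show ?thesis unfolding l1dist_def by (simp add: sum.distrib sum_distrib_left)
qed

lemma l1_pos: assumes "x \<noteq> z" shows "0 < l1dist x z"
proof -
  obtain i where i: "x $ i \<noteq> z $ i" using assms vec_eq_iff by blast
  have "\<bar>x $ i - z $ i\<bar> \<le> l1dist x z" unfolding l1dist_def by (rule member_le_sum) auto
  with i show ?thesis by simp
qed

theorem lemma3:
  fixes m :: "'s::finite \<Rightarrow> real"
    and u1 u2 :: "'s \<Rightarrow> 'b::finite \<Rightarrow> real"
    and y0 ybar :: "'s \<Rightarrow> 'b \<Rightarrow> real"
    and \<epsilon> :: real
  assumes m_pos: "\<forall>s. 0 < m s" and m_sum: "(\<Sum>s\<in>UNIV. m s) = 1"
    and y0_str: "is_strategy y0"
    and y0_strict: "\<forall>\<mu>\<in>Mset m - {mu0 m}. Upay u1 (mu0 m) y0 > Upay u1 \<mu> y0"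
    and y0_2: "Upay u2 (mu0 m) y0 > v2 u2 m"
    and ybar_str: "is_strategy ybar"
    and ybar_1: "\<forall>\<mu>\<in>Mset m. Upay u1 (mu0 m) ybar \<ge> Upay u1 \<mu> ybar"
    and ybar_2: "Upay u2 (mu0 m) ybar \<ge> v2 u2 m"
    and eps: "0 < \<epsilon>" "\<epsilon> \<le> 1"
    and ext: "\<exists>\<mu>e. \<mu>e extreme_point_of Mset m \<and> \<mu>e \<noteq> mu0 m"
  shows "\<forall>\<mu>\<in>Mset m.
     Upay u1 (mu0 m) (\<lambda>a b. \<epsilon> * y0 a b + (1 - \<epsilon>) * ybar a b)
       - Upay u1 \<mu> (\<lambda>a b. \<epsilon> * y0 a b + (1 - \<epsilon>) * ybar a b)
     \<ge> \<epsilon> * Min ((\<lambda>\<mu>e. Upay u1 (mu0 m) y0 - Upay u1 \<mu>e y0)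
                   ` {\<mu>e. \<mu>e extreme_point_of Mset m \<and> \<mu>e \<noteq> mu0 m})
       / Max ((\<lambda>\<mu>e. l1dist \<mu>e (mu0 m))
                   ` {\<mu>e. \<mu>e extreme_point_of Mset m \<and> \<mu>e \<noteq> mu0 m})
       * l1dist \<mu> (mu0 m)"
proof
  fix \<mu> assume mu: "\<mu> \<in> Mset m"
  define K where "K = Mset m"
  define E where "E = {\<mu>e. \<mu>e extreme_point_of Mset m \<and> \<mu>e \<noteq> mu0 m}"
  define g where "g = (\<lambda>\<mu>e. Upay u1 (mu0 m) y0 - Upay u1 \<mu>e y0)"
  define c1 where "c1 = Min (g ` E)"
  define c2 where "c2 = Max ((\<lambda>\<mu>e. l1dist \<mu>e (mu0 m)) ` E)"
  have poly: "polyhedron K" unfolding K_def by (rule Mset_polyhedron)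
  have cpt: "compact K" unfolding K_def
    using Mset_bounded Mset_polyhedron polyhedron_imp_closed compact_eq_bounded_closed by blast
  have cvx: "convex K" using poly polyhedron_imp_convex by blast
  have finE: "finite E" unfolding E_def
    using finite_polyhedron_extreme_points[OF poly] K_def by (auto intro: finite_subset)
  have neE: "E \<noteq> {}" using ext E_def by auto
  have EK: "E \<subseteq> K" unfolding E_def K_def using extreme_point_of_def by auto
  have gpos: "0 < g e" if "e \<in> E" for e
    using y0_strict that EK unfolding g_def E_def K_def by auto
  have c1pos: "0 < c1" unfolding c1_def using finE neE gpos by (simp add: Min_gr_iff)
  have c1le: "c1 \<le> g e" if "e \<in> E" for e unfolding c1_def using finE that by simp
  have c2ge: "l1dist e (mu0 m) \<le> c2" if "e \<in> E" for e unfolding c2_def using finE that by simp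
  have c2pos: "0 < c2" using neE c2ge l1_pos E_def by (smt (verit) all_not_in_conv mem_Collect_eq)
  define T where "T = {\<nu>. c1 / c2 * l1dist \<nu> (mu0 m) \<le> g \<nu>}"
  have cT: "convex T" unfolding convex_def
  proof (intro ballI allI impI)
    fix x y :: "real ^ ('s \<times> 's)" and a b :: real
    assume xy: "x \<in> T" "y \<in> T" and ab: "0 \<le> a" "0 \<le> b" "a + b = 1"
    have "g (a *\<^sub>R x + b *\<^sub>R y) = a * g x + b * g y"
      unfolding g_def Upay_lin_mu using ab(3) by (simp add: algebra_simps) (metis distrib_right mult_1)
    moreover have "c1 / c2 * l1dist (a *\<^sub>R x + b *\<^sub>R y) (mu0 m) \<le> c1 / c2 * (a * l1dist x (mu0 m) + b * l1dist y (mu0 m))"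
      using l1_convex[OF ab] c1pos c2pos by (intro mult_left_mono) auto
    moreover have "c1 / c2 * (a * l1dist x (mu0 m) + b * l1dist y (mu0 m)) \<le> a * g x + b * g y"
    proof -
      have "a * (c1 / c2 * l1dist x (mu0 m)) \<le> a * g x" by (rule mult_left_mono[OF _ ab(1)]) (use xy(1) in \<open>simp add: T_def\<close>)
      moreover have "b * (c1 / c2 * l1dist y (mu0 m)) \<le> b * g y" by (rule mult_left_mono[OF _ ab(2)]) (use xy(2) in \<open>simp add: T_def\<close>)
      ultimately show ?thesis by (simp add: algebra_simps)
    qed
    ultimately show "a *\<^sub>R x + b *\<^sub>R y \<in> T" unfolding T_def by simp
  qed
  have extT: "{x. x extreme_point_of K} \<subseteq> T"
  proof
    fix x assume "x \<in> {x. x extreme_point_of K}"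
    show "x \<in> T"
    proof (cases "x = mu0 m")
      case True then show ?thesis unfolding T_def g_def l1dist_def by simp
    next
      case False
      with \<open>x \<in> _\<close> have xE: "x \<in> E" unfolding E_def K_def by auto
      have "c1 / c2 * l1dist x (mu0 m) \<le> c1 / c2 * c2"
        using c2ge[OF xE] c1pos c2pos by (intro mult_left_mono) auto
      also have "\<dots> = c1" using c2pos by simp
      finally show ?thesis using c1le[OF xE] unfolding T_def by simp
    qed
  qed
  have "K \<subseteq> T"
    using Krein_Milman_Minkowski[OF cpt cvx] extT cT by (metis hull_minimal)
  with mu have muT: "c1 / c2 * l1dist \<mu> (mu0 m) \<le> g \<mu>" unfolding K_def T_def by auto
  have h: "0 \<le> Upay u1 (mu0 m) ybar - Upay u1 \<mu> ybar" using ybar_1 mu by auto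
  have "\<epsilon> * c1 / c2 * l1dist \<mu> (mu0 m) \<le> \<epsilon> * g \<mu>"
    using mult_left_mono[OF muT, of \<epsilon>] eps by simp
  also have "\<dots> \<le> \<epsilon> * g \<mu> + (1 - \<epsilon>) * (Upay u1 (mu0 m) ybar - Upay u1 \<mu> ybar)"
    using h eps by simp
  finally show "\<epsilon> * Min ((\<lambda>\<mu>e. Upay u1 (mu0 m) y0 - Upay u1 \<mu>e y0) ` {\<mu>e. \<mu>e extreme_point_of Mset m \<and> \<mu>e \<noteq> mu0 m})
       / Max ((\<lambda>\<mu>e. l1dist \<mu>e (mu0 m)) ` {\<mu>e. \<mu>e extreme_point_of Mset m \<and> \<mu>e \<noteq> mu0 m})
       * l1dist \<mu> (mu0 m) \<le> Upay u1 (mu0 m) (\<lambda>a b. \<epsilon> * y0 a b + (1 - \<epsilon>) * ybar a b)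
       - Upay u1 \<mu> (\<lambda>a b. \<epsilon> * y0 a b + (1 - \<epsilon>) * ybar a b)"
    unfolding Upay_lin_y c1_def[symmetric] c2_def[symmetric] E_def[symmetric] g_def[symmetric]
    unfolding g_def by (simp add: algebra_simps)
qed

end
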